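(* Let $d$ be a $\delta$-hyperbolic metric on a set containing distinct points $w,x,y,z$, let $(T,d_T)$ be the universal tree on $x,y,z$ with Steiner node $r$, and let $\pi$ be a permutation of $\{x,y,z\}$ such that $(\pi y,\pi z)_w=\max\big((x,y)_w,(y,z)_w,(x,z)_w\big)$ (so that $w$ is sorted into a zone of $\pi x$ and assigned the distance $d_T(w,r):=(\pi y,\pi z)_w$ to $r$). Then the resulting tree distances from $w$ to $\pi y$ and $\pi z$ through $r$ have additive distortion at most $\delta$: \[\big|(\pi y,\pi z)_w+d_T(r,\pi y)-d(w,\pi y)\big|\le\delta\quad\text{and}\quad\big|(\pi y,\pi z)_w+d_T(r,\pi z)-d(w,\pi z)\big|\le\delta.\]
   Context: The Gromov product is $(a,b)_c=\tfrac12\big(d(c,a)+d(c,b)-d(a,b)\big)$. A metric $d$ is $\delta$-hyperbolic if $(a,b)_c\ge\min\big((a,e)_c,(b,e)_c\big)-\delta$ for all points $a,b,c,e$. The universal tree on $x,y,z$ has nodes $x,y,z,r$ with $r$ adjacent to $x,y,z$ by edges of weights $d_T(x,r)=(y,z)_x$, $d_T(y,r)=(x,z)_y$, $d_T(z,r)=(x,y)_z$. *)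

theory Defs
  imports Main "HOL.Real"
begin

definition metric_on :: "'a set \<Rightarrow> ('a \<Rightarrow> 'a \<Rightarrow> real) \<Rightarrow> bool" where
  "metric_on S d \<longleftrightarrow>
     (\<forall>a\<in>S. \<forall>b\<in>S. d a b = 0 \<longleftrightarrow> a = b) \<and>
     (\<forall>a\<in>S. \<forall>b\<in>S. d a b = d b a) \<and>
     (\<forall>a\<in>S. \<forall>b\<in>S. \<forall>c\<in>S. d a c \<le> d a b + d b c)"

definition gromov :: "('a \<Rightarrow> 'a \<Rightarrow> real) \<Rightarrow> 'a \<Rightarrow> 'a \<Rightarrow> 'a \<Rightarrow> real" where
  "gromov d a b c = (d c a + d c b - d a b) / 2"

definition hyperbolic_on :: "'a set \<Rightarrow> ('a \<Rightarrow> 'a \<Rightarrow> real) \<Rightarrow> real \<Rightarrow> bool" where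
  "hyperbolic_on S d \<delta> \<longleftrightarrow>
     (\<forall>a\<in>S. \<forall>b\<in>S. \<forall>c\<in>S. \<forall>e\<in>S.
        gromov d a b c \<ge> min (gromov d a e c) (gromov d b e c) - \<delta>)"

text \<open>Universal tree on x, y, z: edge weight d_T(v, r) between the leaf v \<in> {x,y,z}
  and the Steiner node r: d_T(x,r) = (y,z)_x, d_T(y,r) = (x,z)_y, d_T(z,r) = (x,y)_z.\<close>
definition utree_leaf_dist :: "('a \<Rightarrow> 'a \<Rightarrow> real) \<Rightarrow> 'a \<Rightarrow> 'a \<Rightarrow> 'a \<Rightarrow> 'a \<Rightarrow> real" where
  "utree_leaf_dist d x y z v =
     (if v = x then gromov d y z x
      else if v = y then gromov d x z y
      else gromov d x y z)"

end

theory Submission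
  imports Defs
begin

lemma gsym: assumes "metric_on S d" "a \<in> S" "b \<in> S" "c \<in> S"
  shows "gromov d a b c = gromov d b a c"
  using assms unfolding metric_on_def gromov_def by auto

lemma key: assumes "metric_on S d" "hyperbolic_on S d \<delta>" "a \<in> S" "b \<in> S" "c \<in> S" "w \<in> S"
  and "gromov d b c w \<ge> gromov d a b w" "gromov d b c w \<ge> gromov d a c w"
  shows "\<bar>gromov d b c w + gromov d a c b - d w b\<bar> \<le> \<delta>"
proof -
  have h1: "gromov d a b w \<ge> min (gromov d a c w) (gromov d b c w) - \<delta>"
    using assms(2-6) unfolding hyperbolic_on_def by blast
  have h2: "gromov d a c w \<ge> min (gromov d a b w) (gromov d c b w) - \<delta>"
    using assms(2-6) unfolding hyperbolic_on_def by blast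
  have s: "gromov d c b w = gromov d b c w" using gsym assms by metis
  have e: "gromov d b c w + gromov d a c b - d w b = gromov d a c w - gromov d a b w"
    using assms(1,3-6) unfolding metric_on_def gromov_def by (auto simp: field_simps)
  show ?thesis using h1 h2 s e assms(7,8) by (auto simp: min_def split: if_splits)
qed

lemma key2: assumes "metric_on S d" "hyperbolic_on S d \<delta>" "a \<in> S" "b \<in> S" "c \<in> S" "w \<in> S"
  and "gromov d b c w \<ge> gromov d a b w" "gromov d b c w \<ge> gromov d a c w"
  shows "\<bar>gromov d b c w + gromov d a c b - d w b\<bar> \<le> \<delta>"
    "\<bar>gromov d c b w + gromov d a c b - d w b\<bar> \<le> \<delta>"
    "\<bar>gromov d b c w + gromov d c a b - d w b\<bar> \<le> \<delta>"
    "\<bar>gromov d c b w + gromov d c a b - d w b\<bar> \<le> \<delta>"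
  using key[OF assms] gsym[OF assms(1,3,5,4)] gsym[OF assms(1,4,5,6)] by auto


theorem proposition1:
  fixes S :: "'a set" and d :: "'a \<Rightarrow> 'a \<Rightarrow> real" and \<delta> :: real
    and w x y z :: 'a and \<pi> :: "'a \<Rightarrow> 'a"
  assumes "metric_on S d"
    and "hyperbolic_on S d \<delta>"
    and "w \<in> S" "x \<in> S" "y \<in> S" "z \<in> S"
    and "distinct [w, x, y, z]"
    and "bij_betw \<pi> {x, y, z} {x, y, z}"
    and "gromov d (\<pi> y) (\<pi> z) w = Max {gromov d x y w, gromov d y z w, gromov d x z w}"
  shows "\<bar>gromov d (\<pi> y) (\<pi> z) w + utree_leaf_dist d x y z (\<pi> y) - d w (\<pi> y)\<bar> \<le> \<delta>
       \<and> \<bar>gromov d (\<pi> y) (\<pi> z) w + utree_leaf_dist d x y z (\<pi> z) - d w (\<pi> z)\<bar> \<le> \<delta>"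
proof -
  have m: "gromov d (\<pi> y) (\<pi> z) w \<ge> gromov d x y w" "gromov d (\<pi> y) (\<pi> z) w \<ge> gromov d y z w"
    "gromov d (\<pi> y) (\<pi> z) w \<ge> gromov d x z w" unfolding assms(9) by simp_all
  have s1: "gromov d x y w = gromov d y x w" using gsym[OF assms(1,4,5,3)] .
  have s2: "gromov d x z w = gromov d z x w" using gsym[OF assms(1,4,6,3)] .
  have s3: "gromov d y z w = gromov d z y w" using gsym[OF assms(1,5,6,3)] .
  have inj: "\<pi> y \<noteq> \<pi> z" proof -
    have "inj_on \<pi> {x,y,z}" using assms(8) by (simp add: bij_betw_def)
    moreover have "y \<noteq> z" using assms(7) by simp
    ultimately show ?thesis by (simp add: inj_on_eq_iff)
  qed
  have ran: "\<pi> y \<in> {x,y,z}" "\<pi> z \<in> {x,y,z}" using assms(8) unfolding bij_betw_def by auto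
  have dxy: "x \<noteq> y" "x \<noteq> z" "y \<noteq> z" using assms(7) by auto
  note K = key2[OF assms(1,2)]
  have l: "utree_leaf_dist d x y z x = gromov d y z x" "utree_leaf_dist d x y z y = gromov d x z y"
    "utree_leaf_dist d x y z z = gromov d x y z" using dxy by (simp_all add: utree_leaf_dist_def)
  consider "\<pi> y = x" "\<pi> z = y" | "\<pi> y = x" "\<pi> z = z" | "\<pi> y = y" "\<pi> z = x"
    | "\<pi> y = y" "\<pi> z = z" | "\<pi> y = z" "\<pi> z = x" | "\<pi> y = z" "\<pi> z = y"
    using ran inj by fastforce
  then show ?thesis
  proof cases
    case 1
    note m' = m[unfolded 1]
    show ?thesis unfolding 1 l
      apply (intro conjI)
      apply (rule K[OF assms(6,4,5,3)] K[OF assms(6,5,4,3)]; use m' s1 s2 s3 in linarith)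
      apply (rule K[OF assms(6,4,5,3)] K[OF assms(6,5,4,3)]; use m' s1 s2 s3 in linarith)
      done
  next
    case 2
    note m' = m[unfolded 2]
    show ?thesis unfolding 2 l
      apply (intro conjI)
      apply (rule K[OF assms(5,4,6,3)] K[OF assms(5,6,4,3)]; use m' s1 s2 s3 in linarith)
      apply (rule K[OF assms(5,4,6,3)] K[OF assms(5,6,4,3)]; use m' s1 s2 s3 in linarith)
      done
  next
    case 3
    note m' = m[unfolded 3]
    show ?thesis unfolding 3 l
      apply (intro conjI)
      apply (rule K[OF assms(6,5,4,3)] K[OF assms(6,4,5,3)]; use m' s1 s2 s3 in linarith)
      apply (rule K[OF assms(6,5,4,3)] K[OF assms(6,4,5,3)]; use m' s1 s2 s3 in linarith)
      done
  next
    case 4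
    note m' = m[unfolded 4]
    show ?thesis unfolding 4 l
      apply (intro conjI)
      apply (rule K[OF assms(4,5,6,3)] K[OF assms(4,6,5,3)]; use m' s1 s2 s3 in linarith)
      apply (rule K[OF assms(4,5,6,3)] K[OF assms(4,6,5,3)]; use m' s1 s2 s3 in linarith)
      done
  next
    case 5
    note m' = m[unfolded 5]
    show ?thesis unfolding 5 l
      apply (intro conjI)
      apply (rule K[OF assms(5,6,4,3)] K[OF assms(5,4,6,3)]; use m' s1 s2 s3 in linarith)
      apply (rule K[OF assms(5,6,4,3)] K[OF assms(5,4,6,3)]; use m' s1 s2 s3 in linarith)
      done
  next
    case 6
    note m' = m[unfolded 6]
    show ?thesis unfolding 6 l
      apply (intro conjI)
      apply (rule K[OF assms(4,6,5,3)] K[OF assms(4,5,6,3)]; use m' s1 s2 s3 in linarith)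
      apply (rule K[OF assms(4,6,5,3)] K[OF assms(4,5,6,3)]; use m' s1 s2 s3 in linarith)
      done
  qed
qed

end
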